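(* Let $n\ge3$, let $e_1,\dots,e_n\ge1$ be integers with $E=e_1e_2\cdots e_n\ge2$, let $c=\max\{e_1,\dots,e_n\}$, and let $R$ be a commutative unital ring in which $c!$ is invertible. Then for all distinct $i,j\in\{1,\dots,n\}$, all integers $m\ge0$ and all $r\in R$, the group $G_{R,n;e_1,\dots,e_n}$ contains $\alpha_{i;j}^{(t)}(r)$ where $t=t_{i,j}+m(E-1)$ and $t_{i,j}=e_ie_{i+1}\cdots e_{j-1}$ (indices ordered cyclically and taken modulo $n$). Consequently, for every polynomial $P\in R[y]$ and distinct $i,j$, $G_{R,n;e_1,\dots,e_n}$ contains the automorphism with $x_i\mapsto x_i+x_j^{t_{i,j}}P(x_j^{E-1})$ and $x_\ell\mapsto x_\ell$ for $\ell\ne i$.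
   Context: For distinct $i,j$, $e\ge0$, $r\in R$: $\alpha_{i;j}^{(e)}(r)\in\mathrm{Aut}(R[x_1,\dots,x_n])$ maps $x_i\mapsto x_i+rx_j^e$ and fixes $x_\ell$ for $\ell\ne i$. $G_{R,n;e_1,\dots,e_n}$ is the subgroup generated by $\{\alpha_{i;i+1}^{(e_i)}(r): 1\le i\le n, r\in R\}$, indices modulo $n$. The product $t_{i,j}$ runs cyclically from $e_i$ to $e_{j-1}$, e.g. $t_{i,i+1}=e_i$ and $t_{n,2}=e_ne_1$. *)

theory Defs
  imports "HOL-Library.Poly_Mapping" "HOL-Computational_Algebra.Polynomial"
begin

text \<open>Multivariate polynomials over R in variables indexed by nat (we use x_1,...,x_n),
  represented as finitely supported maps from monomials (exponent vectors) to coefficients.\<close>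
type_synonym 'a mpoly = "(nat \<Rightarrow>\<^sub>0 nat) \<Rightarrow>\<^sub>0 'a"

definition mconst :: "'a::comm_ring_1 \<Rightarrow> 'a mpoly" where
  "mconst c = Poly_Mapping.single 0 c"

definition mvar :: "nat \<Rightarrow> 'a::comm_ring_1 mpoly" where
  "mvar i = Poly_Mapping.single (Poly_Mapping.single i 1) 1"

definition msubst :: "(nat \<Rightarrow> 'a::comm_ring_1 mpoly) \<Rightarrow> 'a mpoly \<Rightarrow> 'a mpoly" where
  "msubst s p = (\<Sum>m\<in>Poly_Mapping.keys p. mconst (Poly_Mapping.lookup p m) * (\<Prod>l\<in>Poly_Mapping.keys m. s l ^ Poly_Mapping.lookup m l))"

definition elem_map :: "nat \<Rightarrow> 'a::comm_ring_1 mpoly \<Rightarrow> 'a mpoly \<Rightarrow> 'a mpoly" where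
  "elem_map i f = msubst (\<lambda>l. if l = i then mvar i + f else mvar l)"

definition alpha :: "nat \<Rightarrow> nat \<Rightarrow> nat \<Rightarrow> 'a::comm_ring_1 \<Rightarrow> 'a mpoly \<Rightarrow> 'a mpoly" where
  "alpha i j e r = elem_map i (mconst r * mvar j ^ e)"

definition cyc_succ :: "nat \<Rightarrow> nat \<Rightarrow> nat" where
  "cyc_succ n i = (if i = n then 1 else i + 1)"

definition cyc_add :: "nat \<Rightarrow> nat \<Rightarrow> nat \<Rightarrow> nat" where
  "cyc_add n i k = ((i - 1 + k) mod n) + 1"

definition t_prod :: "nat \<Rightarrow> (nat \<Rightarrow> nat) \<Rightarrow> nat \<Rightarrow> nat \<Rightarrow> nat" where
  "t_prod n e i j = (\<Prod>k<((j + n - i) mod n). e (cyc_add n i k))"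

text \<open>G_{R,n;e_1..e_n}: subgroup of Aut(R[x]) generated by the alpha_{i;i+1}^{(e_i)}(r).
  Since the inverse of alpha_{i;i+1}^{(e_i)}(r) is alpha_{i;i+1}^{(e_i)}(-r), the generated
  subgroup is the closure of the identity under left composition with generators.\<close>
inductive_set Ggrp :: "nat \<Rightarrow> (nat \<Rightarrow> nat) \<Rightarrow> ('a::comm_ring_1 mpoly \<Rightarrow> 'a mpoly) set"
  for n :: nat and e :: "nat \<Rightarrow> nat" where
  Ggrp_id: "id \<in> Ggrp n e"
| Ggrp_step: "\<lbrakk>f \<in> Ggrp n e; i \<in> {1..n}\<rbrakk> \<Longrightarrow> alpha i (cyc_succ n i) (e i) r \<circ> f \<in> Ggrp n e"

end

theory Submission
  imports Defs
begin


lemma mconst_0[simp]: "mconst 0 = 0" by (simp add: mconst_def)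
lemma mconst_1[simp]: "mconst 1 = 1" by (simp add: mconst_def)
lemma mconst_add: "mconst (a + b) = mconst a + mconst b" by (simp add: mconst_def single_add)
lemma mconst_mult: "mconst (a * b) = mconst a * mconst b" by (simp add: mconst_def mult_single)
lemma mconst_uminus: "mconst (- a) = - mconst a" by (simp add: mconst_def single_uminus)
lemma mconst_diff: "mconst (a - b) = mconst a - mconst b" by (simp add: mconst_def single_diff)
lemma mconst_power: "mconst (a ^ k) = mconst a ^ k" by (induction k) (simp_all add: mconst_mult)
lemma mconst_of_nat: "mconst (of_nat k) = of_nat k" by (simp add: mconst_def)

definition mmono :: "(nat \<Rightarrow> 'a::comm_ring_1 mpoly) \<Rightarrow> (nat \<Rightarrow>\<^sub>0 nat) \<Rightarrow> 'a mpoly" where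
  "mmono s m = (\<Prod>l\<in>Poly_Mapping.keys m. s l ^ Poly_Mapping.lookup m l)"

lemma mmono_superset: "finite L \<Longrightarrow> Poly_Mapping.keys m \<subseteq> L \<Longrightarrow>
   mmono s m = (\<Prod>l\<in>L. s l ^ Poly_Mapping.lookup m l)"
  unfolding mmono_def
  by (rule prod.mono_neutral_left) (auto simp: in_keys_iff)

lemma mmono_add: "mmono s (m + m') = mmono s m * mmono s m'"
proof -
  let ?L = "Poly_Mapping.keys m \<union> Poly_Mapping.keys m'"
  have "mmono s (m + m') = (\<Prod>l\<in>?L. s l ^ Poly_Mapping.lookup (m + m') l)"
    by (rule mmono_superset) (auto simp: keys_add)
  also have "\<dots> = (\<Prod>l\<in>?L. s l ^ Poly_Mapping.lookup m l * s l ^ Poly_Mapping.lookup m' l)"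
    by (simp add: lookup_add power_add)
  also have "\<dots> = mmono s m * mmono s m'"
    by (simp add: prod.distrib mmono_superset[of ?L])
  finally show ?thesis .
qed

lemma mmono_zero[simp]: "mmono s 0 = 1" by (simp add: mmono_def)

lemma msubst_superset: "finite K \<Longrightarrow> Poly_Mapping.keys p \<subseteq> K \<Longrightarrow>
   msubst s p = (\<Sum>m\<in>K. mconst (Poly_Mapping.lookup p m) * mmono s m)"
  unfolding msubst_def mmono_def
  by (rule sum.mono_neutral_left) (auto simp: in_keys_iff)

lemma msubst_add: "msubst s (p + q) = msubst s p + msubst s q"
proof -
  let ?K = "Poly_Mapping.keys p \<union> Poly_Mapping.keys q"
  show ?thesis
    by (simp add: msubst_superset[of ?K] keys_add lookup_add mconst_add distrib_right sum.distrib)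
qed

lemma msubst_zero[simp]: "msubst s 0 = 0" by (simp add: msubst_def)

lemma msubst_sum: "msubst s (\<Sum>i\<in>I. f i) = (\<Sum>i\<in>I. msubst s (f i))"
  by (induction I rule: infinite_finite_induct) (simp_all add: msubst_add)

lemma msubst_single: "msubst s (Poly_Mapping.single m c) = mconst c * mmono s m"
  by (cases "c = 0") (simp_all add: msubst_def mmono_def)

lemma mpoly_sum_single: "(p::'a::comm_ring_1 mpoly) = (\<Sum>m\<in>Poly_Mapping.keys p. Poly_Mapping.single m (Poly_Mapping.lookup p m))"
  by (rule poly_mapping_eqI) (simp add: lookup_sum lookup_single when_def in_keys_iff)

lemma msubst_mult_single: "msubst s (Poly_Mapping.single a c * q) = msubst s (Poly_Mapping.single a c) * msubst s q"
proof -
  have "Poly_Mapping.single a c * q = (\<Sum>b\<in>Poly_Mapping.keys q. Poly_Mapping.single a c * Poly_Mapping.single b (Poly_Mapping.lookup q b))"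
    by (subst mpoly_sum_single[of q]) (simp only: sum_distrib_left)
  also have "\<dots> = (\<Sum>b\<in>Poly_Mapping.keys q. Poly_Mapping.single (a + b) (c * Poly_Mapping.lookup q b))"
    by (simp only: mult_single)
  finally have "msubst s (Poly_Mapping.single a c * q) = (\<Sum>b\<in>Poly_Mapping.keys q. mconst (c * Poly_Mapping.lookup q b) * mmono s (a + b))"
    by (simp only: msubst_sum msubst_single)
  also have "\<dots> = (\<Sum>b\<in>Poly_Mapping.keys q. (mconst c * mmono s a) * (mconst (Poly_Mapping.lookup q b) * mmono s b))"
    by (simp only: mconst_mult mmono_add mult_ac)
  also have "\<dots> = (mconst c * mmono s a) * msubst s q"
    by (simp only: msubst_def mmono_def sum_distrib_left)
  finally show ?thesis by (simp only: msubst_single)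
qed

lemma msubst_mult: "msubst s (p * q) = msubst s p * msubst s q"
proof -
  have "p * q = (\<Sum>a\<in>Poly_Mapping.keys p. Poly_Mapping.single a (Poly_Mapping.lookup p a) * q)"
    by (subst mpoly_sum_single[of p]) (simp only: sum_distrib_right)
  then have "msubst s (p * q) = (\<Sum>a\<in>Poly_Mapping.keys p. msubst s (Poly_Mapping.single a (Poly_Mapping.lookup p a)) * msubst s q)"
    by (simp only: msubst_sum msubst_mult_single)
  also have "\<dots> = msubst s (\<Sum>a\<in>Poly_Mapping.keys p. Poly_Mapping.single a (Poly_Mapping.lookup p a)) * msubst s q"
    by (simp only: msubst_sum sum_distrib_right)
  finally show ?thesis by (simp only: mpoly_sum_single[of p, symmetric])
qed

lemma msubst_mconst[simp]: "msubst s (mconst c) = mconst c"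
  by (simp add: mconst_def msubst_single)

lemma msubst_one[simp]: "msubst s 1 = 1"
  using msubst_mconst[of s 1] by simp

lemma msubst_mvar[simp]: "msubst s (mvar l) = s l"
  by (simp add: mvar_def msubst_single mmono_def)

lemma msubst_uminus: "msubst s (- p) = - msubst s p"
proof -
  have "msubst s (- p) + msubst s p = 0" by (simp only: msubst_add[symmetric] add.left_inverse msubst_zero)
  then show ?thesis by (simp only: eq_neg_iff_add_eq_0)
qed

lemma msubst_diff: "msubst s (p - q) = msubst s p - msubst s q"
  by (simp only: diff_conv_add_uminus msubst_add msubst_uminus)

lemma msubst_power: "msubst s (p ^ k) = msubst s p ^ k"
  by (induction k) (simp_all add: msubst_mult)

lemma msubst_prod: "msubst s (\<Prod>i\<in>I. f i) = (\<Prod>i\<in>I. msubst s (f i))"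
  by (induction I rule: infinite_finite_induct) (simp_all add: msubst_mult)

lemma msubst_of_nat[simp]: "msubst s (of_nat k) = of_nat k"
  by (simp only: mconst_of_nat[symmetric] msubst_mconst)

lemma msubst_expand: "msubst s p = (\<Sum>m\<in>Poly_Mapping.keys p. mconst (Poly_Mapping.lookup p m) *
    (\<Prod>l\<in>Poly_Mapping.keys m. s l ^ Poly_Mapping.lookup m l))"
  by (simp add: msubst_def)

lemma pm_sum_single: "(p::'b \<Rightarrow>\<^sub>0 'c::comm_monoid_add) = (\<Sum>m\<in>Poly_Mapping.keys p. Poly_Mapping.single m (Poly_Mapping.lookup p m))"
  by (rule poly_mapping_eqI) (simp add: lookup_sum lookup_single when_def in_keys_iff)

lemma mvar_power: "mvar l ^ k = (Poly_Mapping.single (Poly_Mapping.single l k) 1 :: 'a::comm_ring_1 mpoly)"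
  by (induction k) (simp_all add: mvar_def mult_single single_add[symmetric] add.commute)

lemma prod_single: "(\<Prod>i\<in>I. Poly_Mapping.single (f i) (1::'a::comm_ring_1)) = Poly_Mapping.single (\<Sum>i\<in>I. f i) 1"
  by (induction I rule: infinite_finite_induct) (simp_all add: mult_single)

lemma mmono_mvar: "mmono mvar m = (Poly_Mapping.single m 1 :: 'a::comm_ring_1 mpoly)"
proof -
  have "mmono mvar m = (\<Prod>l\<in>Poly_Mapping.keys m. (Poly_Mapping.single (Poly_Mapping.single l (Poly_Mapping.lookup m l)) 1 :: 'a mpoly))"
    by (simp only: mmono_def mvar_power)
  also have "\<dots> = Poly_Mapping.single (\<Sum>l\<in>Poly_Mapping.keys m. Poly_Mapping.single l (Poly_Mapping.lookup m l)) 1"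
    by (rule prod_single)
  also have "\<dots> = Poly_Mapping.single m 1"
    by (simp only: pm_sum_single[symmetric])
  finally show ?thesis .
qed

lemma msubst_id: "msubst mvar p = p"
proof -
  have "msubst mvar p = (\<Sum>m\<in>Poly_Mapping.keys p. mconst (Poly_Mapping.lookup p m) * mmono mvar m)"
    unfolding msubst_def mmono_def ..
  also have "\<dots> = (\<Sum>m\<in>Poly_Mapping.keys p. Poly_Mapping.single m (Poly_Mapping.lookup p m))"
    by (simp only: mmono_mvar mconst_def mult_single add_0 mult_1_right)
  also have "\<dots> = p" by (rule mpoly_sum_single[symmetric])
  finally show ?thesis .
qed


lemma msubst_comp: "msubst s (msubst t p) = msubst (\<lambda>l. msubst s (t l)) p"
proof -
  have "msubst s (msubst t p) = msubst s (\<Sum>m\<in>Poly_Mapping.keys p. mconst (Poly_Mapping.lookup p m) *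
    (\<Prod>l\<in>Poly_Mapping.keys m. t l ^ Poly_Mapping.lookup m l))"
    by (simp only: msubst_def[of t p])
  also have "\<dots> = (\<Sum>m\<in>Poly_Mapping.keys p. mconst (Poly_Mapping.lookup p m) *
    (\<Prod>l\<in>Poly_Mapping.keys m. msubst s (t l) ^ Poly_Mapping.lookup m l))"
    unfolding msubst_sum
  proof (rule sum.cong[OF refl])
    fix m
    show "msubst s (mconst (Poly_Mapping.lookup p m) * (\<Prod>l\<in>Poly_Mapping.keys m. t l ^ Poly_Mapping.lookup m l)) =
      mconst (Poly_Mapping.lookup p m) * (\<Prod>l\<in>Poly_Mapping.keys m. msubst s (t l) ^ Poly_Mapping.lookup m l)"
      unfolding msubst_mult msubst_mconst msubst_prod msubst_power ..
  qed
  also have "\<dots> = msubst (\<lambda>l. msubst s (t l)) p"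
    by (simp only: msubst_def[of "\<lambda>l. msubst s (t l)" p])
  finally show ?thesis .
qed

lemma msubst_cong: "(\<And>l. s l = s' l) \<Longrightarrow> msubst s p = msubst s' p"
proof -
  assume h: "\<And>l. s l = s' l"
  have "s = s'" by (rule ext) (rule h)
  then show ?thesis by (rule arg_cong)
qed

definition mfree :: "nat \<Rightarrow> 'a::comm_ring_1 mpoly \<Rightarrow> bool" where
  "mfree i p \<longleftrightarrow> (\<forall>s s'. (\<forall>l. l \<noteq> i \<longrightarrow> s l = s' l) \<longrightarrow> msubst s p = msubst s' p)"

lemma mfreeD: "mfree i p \<Longrightarrow> (\<And>l. l \<noteq> i \<Longrightarrow> s l = s' l) \<Longrightarrow> msubst s p = msubst s' p"
  unfolding mfree_def by blast

lemma mfree_mconst[simp]: "mfree i (mconst c)" by (simp add: mfree_def)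
lemma mfree_of_nat[simp]: "mfree i (of_nat c)" by (simp add: mfree_def)
lemma mfree_one[simp]: "mfree i 1" by (simp add: mfree_def)
lemma mfree_zero[simp]: "mfree i 0" by (simp add: mfree_def)
lemma mfree_mvar[simp]: "l \<noteq> i \<Longrightarrow> mfree i (mvar l)" by (simp add: mfree_def)
lemma mfreeI2: "mfree i p \<Longrightarrow> \<forall>l. l \<noteq> i \<longrightarrow> s l = s' l \<Longrightarrow> msubst s p = msubst s' p"
  by (simp add: mfree_def)

lemma mfree_add[simp]: fixes p q :: "'a::comm_ring_1 mpoly" assumes "mfree i p" "mfree i q" shows "mfree i (p + q)"
proof (unfold mfree_def, intro allI impI)
  fix s s' :: "nat \<Rightarrow> 'a mpoly" assume h: "\<forall>l. l \<noteq> i \<longrightarrow> s l = s' l"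
  show "msubst s (p + q) = msubst s' (p + q)"
    using mfreeI2[OF assms(1) h] mfreeI2[OF assms(2) h] by (simp add: msubst_add)
qed
lemma mfree_mult[simp]: fixes p q :: "'a::comm_ring_1 mpoly" assumes "mfree i p" "mfree i q" shows "mfree i (p * q)"
proof (unfold mfree_def, intro allI impI)
  fix s s' :: "nat \<Rightarrow> 'a mpoly" assume h: "\<forall>l. l \<noteq> i \<longrightarrow> s l = s' l"
  show "msubst s (p * q) = msubst s' (p * q)"
    using mfreeI2[OF assms(1) h] mfreeI2[OF assms(2) h] by (simp add: msubst_mult)
qed
lemma mfree_uminus[simp]: fixes p :: "'a::comm_ring_1 mpoly" assumes "mfree i p" shows "mfree i (- p)"
proof (unfold mfree_def, intro allI impI)
  fix s s' :: "nat \<Rightarrow> 'a mpoly" assume h: "\<forall>l. l \<noteq> i \<longrightarrow> s l = s' l"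
  show "msubst s (- p) = msubst s' (- p)"
    using mfreeI2[OF assms(1) h] by (simp add: msubst_uminus)
qed
lemma mfree_diff[simp]: fixes p q :: "'a::comm_ring_1 mpoly" assumes "mfree i p" "mfree i q" shows "mfree i (p - q)"
proof (unfold mfree_def, intro allI impI)
  fix s s' :: "nat \<Rightarrow> 'a mpoly" assume h: "\<forall>l. l \<noteq> i \<longrightarrow> s l = s' l"
  show "msubst s (p - q) = msubst s' (p - q)"
    using mfreeI2[OF assms(1) h] mfreeI2[OF assms(2) h] by (simp add: msubst_diff)
qed
lemma mfree_power[simp]: fixes p :: "'a::comm_ring_1 mpoly" assumes "mfree i p" shows "mfree i (p ^ k)"
proof (unfold mfree_def, intro allI impI)
  fix s s' :: "nat \<Rightarrow> 'a mpoly" assume h: "\<forall>l. l \<noteq> i \<longrightarrow> s l = s' l"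
  show "msubst s (p ^ k) = msubst s' (p ^ k)"
    using mfreeI2[OF assms(1) h] by (simp add: msubst_power)
qed
lemma mfree_sum: fixes f :: "'b \<Rightarrow> 'a::comm_ring_1 mpoly" assumes "\<And>x. x \<in> A \<Longrightarrow> mfree i (f x)" shows "mfree i (\<Sum>x\<in>A. f x)"
proof (unfold mfree_def, intro allI impI)
  fix s s' :: "nat \<Rightarrow> 'a mpoly" assume h: "\<forall>l. l \<noteq> i \<longrightarrow> s l = s' l"
  show "msubst s (\<Sum>x\<in>A. f x) = msubst s' (\<Sum>x\<in>A. f x)"
    using mfreeI2[OF assms h] by (simp add: msubst_sum)
qed

lemma mfree_subst_id: "mfree i p \<Longrightarrow> (\<And>l. l \<noteq> i \<Longrightarrow> s l = mvar l) \<Longrightarrow> msubst s p = p"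
proof -
  assume a: "mfree i p" "\<And>l. l \<noteq> i \<Longrightarrow> s l = mvar l"
  have "msubst s p = msubst mvar p" by (rule mfreeD[OF a(1)]) (rule a(2))
  then show ?thesis by (simp only: msubst_id)
qed

lemma mfree_msubst: fixes p :: "'a::comm_ring_1 mpoly" shows "mfree i p \<Longrightarrow> (\<And>l. mfree i (t l)) \<Longrightarrow> (t i = mvar i) \<Longrightarrow> mfree i (msubst t p)"
proof -
  assume fp: "mfree i p" and ft: "\<And>l. mfree i (t l)" and ti: "t i = mvar i"
  show ?thesis unfolding mfree_def
  proof (intro allI impI)
    fix s s' :: "nat \<Rightarrow> 'a mpoly" assume h: "\<forall>l. l \<noteq> i \<longrightarrow> s l = s' l"
    have "msubst s (msubst t p) = msubst (\<lambda>l. msubst s (t l)) p" by (rule msubst_comp)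
    also have "\<dots> = msubst (\<lambda>l. msubst s' (t l)) p"
      by (rule mfreeD[OF fp]) (use ft h in \<open>auto intro: mfreeD\<close>)
    also have "\<dots> = msubst s' (msubst t p)" by (rule msubst_comp[symmetric])
    finally show "msubst s (msubst t p) = msubst s' (msubst t p)" .
  qed
qed

lemma elem_map_apply: "elem_map i g p = msubst (\<lambda>l. if l = i then mvar i + g else mvar l) p"
  by (simp add: elem_map_def)

lemma elem_map_comp: "mfree i h \<Longrightarrow> elem_map i g \<circ> elem_map i h = elem_map i (g + h)"
proof
  fix p
  assume fh: "mfree i h"
  have "(elem_map i g \<circ> elem_map i h) p =
     msubst (\<lambda>l. msubst (\<lambda>l. if l = i then mvar i + g else mvar l) (if l = i then mvar i + h else mvar l)) p"
    by (simp add: elem_map_def msubst_comp)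
  also have "\<dots> = elem_map i (g + h) p"
    unfolding elem_map_def
    by (rule msubst_cong) (auto simp: msubst_add mfree_subst_id[OF fh] add.assoc)
  finally show "(elem_map i g \<circ> elem_map i h) p = elem_map i (g + h) p" .
qed

lemma elem_map_zero: "elem_map i 0 = id"
proof
  fix p :: "'a mpoly"
  have "elem_map i 0 p = msubst mvar p" unfolding elem_map_def by (rule msubst_cong) auto
  then show "elem_map i 0 p = id p" by (simp add: msubst_id)
qed

lemma elem_map_conj:
  assumes "k \<noteq> i" "mfree i g" "mfree i h" "mfree k h"
  shows "elem_map k h \<circ> elem_map i g \<circ> elem_map k (- h) = elem_map i (elem_map k h g)"
proof
  fix p :: "'a mpoly"
  let ?sh = "\<lambda>l. if l = k then mvar k + h else mvar l"
  let ?sg = "\<lambda>l. if l = i then mvar i + g else mvar l"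
  let ?sm = "\<lambda>l. if l = k then mvar k + - h else mvar l"
  have "(elem_map k h \<circ> elem_map i g \<circ> elem_map k (- h)) p =
     msubst (\<lambda>l. msubst ?sh (msubst ?sg (?sm l))) p"
    by (simp add: elem_map_def msubst_comp)
  also have "\<dots> = msubst (\<lambda>l. if l = i then mvar i + elem_map k h g else mvar l) p"
  proof (rule msubst_cong)
    fix l
    show "msubst ?sh (msubst ?sg (?sm l)) = (if l = i then mvar i + elem_map k h g else mvar l)"
    proof (cases "l = k")
      case True
      have "msubst ?sg (mvar k + - h) = mvar k + - h"
        by (rule mfree_subst_id[of i]) (use assms in auto)
      moreover have "msubst ?sh (mvar k + - h) = mvar k"
      proof -
        have "msubst ?sh h = h" by (rule mfree_subst_id[of k]) (use assms in auto)
        have "msubst ?sh (mvar k + - h) = msubst ?sh (mvar k) + - msubst ?sh h"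
          by (simp only: msubst_add msubst_uminus)
        also have "\<dots> = mvar k" using \<open>msubst ?sh h = h\<close> by simp
        finally show ?thesis .
      qed
      ultimately have "msubst ?sh (msubst ?sg (mvar k + - h)) = mvar k" by (simp only:)
      moreover have "?sm l = mvar k + - h" using True by simp
      ultimately show ?thesis using True assms(1) by (simp only: if_False)
    next
      case False
      then show ?thesis using assms by (auto simp: msubst_add elem_map_def)
    qed
  qed
  also have "\<dots> = elem_map i (elem_map k h g) p" unfolding elem_map_def by (rule refl)
  finally show "(elem_map k h \<circ> elem_map i g \<circ> elem_map k (- h)) p = elem_map i (elem_map k h g) p" .
qed



lemma Ggrp_comp: "f \<in> Ggrp n e \<Longrightarrow> g \<in> Ggrp n e \<Longrightarrow> f \<circ> g \<in> Ggrp n e"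
proof (induction f rule: Ggrp.induct)
  case Ggrp_id
  then show ?case by simp
next
  case (Ggrp_step f i r)
  then have "alpha i (cyc_succ n i) (e i) r \<circ> (f \<circ> g) \<in> Ggrp n e" by (intro Ggrp.Ggrp_step) auto
  then show ?case by (simp only: comp_assoc)
qed

lemma elem_map_sum:
  assumes "finite A" "\<And>x. x \<in> A \<Longrightarrow> mfree i (g x)" "\<And>x. x \<in> A \<Longrightarrow> elem_map i (g x) \<in> Ggrp n e"
  shows "elem_map i (\<Sum>x\<in>A. g x) \<in> Ggrp n e"
  using assms
proof (induction A rule: finite_induct)
  case empty
  show ?case unfolding sum.empty elem_map_zero by (rule Ggrp.Ggrp_id)
next
  case (insert x F)
  have "elem_map i (\<Sum>x\<in>insert x F. g x) = elem_map i (g x) \<circ> elem_map i (\<Sum>x\<in>F. g x)"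
    using insert by (simp add: elem_map_comp mfree_sum)
  moreover have "elem_map i (g x) \<in> Ggrp n e" using insert by simp
  moreover have "elem_map i (\<Sum>x\<in>F. g x) \<in> Ggrp n e" using insert by simp
  ultimately show ?case by (simp only: Ggrp_comp)
qed

definition Gfd :: "nat \<Rightarrow> nat \<Rightarrow> int" where
  "Gfd d l = (\<Sum>x\<le>d. (-1)^x * of_nat (d choose x) * of_nat x ^ l)"

lemma Gfd_rec: "Gfd (Suc d) l = Gfd d l - (\<Sum>j\<le>l. of_nat (l choose j) * Gfd d j)"
proof -
  have A: "Gfd (Suc d) l = (\<Sum>x\<le>Suc d. (-1)^x * of_nat (d choose x) * of_nat x ^ l)
       + (\<Sum>x\<le>Suc d. (-1)^x * (if x = 0 then 0 else of_nat (d choose (x - 1))) * of_nat x ^ l)"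
    unfolding Gfd_def sum.distrib[symmetric]
  proof (rule sum.cong[OF refl])
    fix x assume "x \<in> {..Suc d}"
    show "(-1)^x * of_nat (Suc d choose x) * of_nat x ^ l =
      (-1)^x * of_nat (d choose x) * of_nat x ^ l + (-1)^x * (if x = 0 then 0 else of_nat (d choose (x - 1))) * of_nat x ^ l"
      by (cases x) (simp_all add: algebra_simps)
  qed
  have B: "(\<Sum>x\<le>Suc d. (-1)^x * of_nat (d choose x) * of_nat x ^ l) = Gfd d l"
    by (simp add: Gfd_def)
  have C: "(\<Sum>x\<le>Suc d. (-1)^x * (if x = 0 then 0 else of_nat (d choose (x - 1))) * (of_nat x ^ l :: int))
     = (\<Sum>x\<le>d. (-1)^(Suc x) * of_nat (d choose x) * of_nat (Suc x) ^ l)"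
    by (subst sum.atMost_Suc_shift) simp
  also have "\<dots> = - (\<Sum>x\<le>d. (-1)^x * of_nat (d choose x) * (\<Sum>j\<le>l. of_nat (l choose j) * of_nat x ^ j))"
  proof -
    have "of_nat (Suc x) ^ l = (\<Sum>j\<le>l. of_nat (l choose j) * (of_nat x ^ j :: int))" for x
      using binomial_ring[of "of_nat x :: int" 1 l] by (simp add: add.commute)
    then show ?thesis by (simp add: sum_negf)
  qed
  also have "\<dots> = - (\<Sum>j\<le>l. of_nat (l choose j) * Gfd d j)"
    by (simp add: Gfd_def sum_distrib_left sum_distrib_right mult_ac sum.swap[of _ "{..l}"])
  finally show ?thesis using A B by simp
qed

lemma Gfd_val: "l \<le> d \<Longrightarrow> Gfd d l = (if l = d then (-1)^d * fact d else 0)"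
proof (induction d arbitrary: l)
  case 0
  then show ?case by (simp add: Gfd_def)
next
  case (Suc d)
  have IH: "\<And>j. j \<le> d \<Longrightarrow> Gfd d j = (if j = d then (-1)^d * fact d else 0)" using Suc.IH .
  show ?case
  proof (cases "l \<le> d")
    case True
    have "(\<Sum>j\<le>l. of_nat (l choose j) * Gfd d j) = (\<Sum>j\<le>l. if j = d then of_nat (l choose j) * ((-1)^d * fact d) else 0)"
      by (rule sum.cong[OF refl]) (use True IH in auto)
    also have "\<dots> = (if l = d then (-1)^d * fact d else 0)"
      using True by (auto simp: sum.delta)
    finally show ?thesis using True IH Gfd_rec[of d l] by auto
  next
    case False
    then have l: "l = Suc d" using Suc.prems by simp
    have "(\<Sum>j\<le>Suc d. of_nat (Suc d choose j) * Gfd d j) =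
      Gfd d (Suc d) + (\<Sum>j\<le>d. of_nat (Suc d choose j) * Gfd d j)"
      by (simp add: sum.atMost_Suc)
    also have "(\<Sum>j\<le>d. of_nat (Suc d choose j) * Gfd d j) = (\<Sum>j\<le>d. if j = d then of_nat (Suc d) * ((-1)^d * fact d) else 0)"
      by (rule sum.cong[OF refl]) (use IH in auto)
    also have "\<dots> = of_nat (Suc d) * ((-1)^d * fact d)" by (simp add: sum.delta)
    finally show ?thesis using Gfd_rec[of d "Suc d"] l by (simp add: algebra_simps)
  qed
qed


lemma mconst_sum: "mconst (\<Sum>x\<in>A. f x) = (\<Sum>x\<in>A. mconst (f x))"
  by (induction A rule: infinite_finite_induct) (simp_all add: mconst_add)

lemma extract_top:
  fixes a :: "nat \<Rightarrow> 'a::comm_ring_1 mpoly"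
  assumes u: "of_nat (fact d) * u = (1::'a)"
    and fa: "\<And>l. l \<le> d \<Longrightarrow> mfree i (a l)"
    and H: "\<And>s r. elem_map i (mconst r * (\<Sum>l\<le>d. mconst s ^ l * a l)) \<in> Ggrp n e"
  shows "elem_map i (mconst r * a d) \<in> Ggrp n e"
proof -
  define c where "c x = r * u * (-1)^d * ((-1)^x * of_nat (d choose x))" for x
  have "elem_map i (\<Sum>x\<le>d. mconst (c x) * (\<Sum>l\<le>d. mconst (of_nat x) ^ l * a l)) \<in> Ggrp n e"
  proof (rule elem_map_sum)
    fix x assume "x \<in> {..d}"
    have hl: "mfree i (mconst (of_nat x) ^ l * a l)" if "l \<in> {..d}" for l
      using that fa by (intro mfree_mult mfree_power mfree_mconst) auto
    show "mfree i (mconst (c x) * (\<Sum>l\<le>d. mconst (of_nat x) ^ l * a l))"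
      by (rule mfree_mult[OF mfree_mconst mfree_sum[OF hl]])
  next
    fix x show "elem_map i (mconst (c x) * (\<Sum>l\<le>d. mconst (of_nat x) ^ l * a l)) \<in> Ggrp n e"
      by (rule H)
  qed simp
  moreover have "(\<Sum>x\<le>d. mconst (c x) * (\<Sum>l\<le>d. mconst (of_nat x) ^ l * a l)) = mconst r * a d"
  proof -
    have "(\<Sum>x\<le>d. mconst (c x) * (\<Sum>l\<le>d. mconst (of_nat x) ^ l * a l))
        = (\<Sum>l\<le>d. mconst (\<Sum>x\<le>d. c x * of_nat x ^ l) * a l)"
    proof -
      have "(\<Sum>x\<le>d. mconst (c x) * (\<Sum>l\<le>d. mconst (of_nat x) ^ l * a l))
          = (\<Sum>x\<le>d. \<Sum>l\<le>d. mconst (c x * of_nat x ^ l) * a l)"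
        by (simp only: sum_distrib_left mconst_mult mconst_power mult.assoc)
      also have "\<dots> = (\<Sum>l\<le>d. \<Sum>x\<le>d. mconst (c x * of_nat x ^ l) * a l)"
        by (rule sum.swap)
      also have "\<dots> = (\<Sum>l\<le>d. mconst (\<Sum>x\<le>d. c x * of_nat x ^ l) * a l)"
        by (simp only: mconst_sum sum_distrib_right)
      finally show ?thesis .
    qed
    also have "\<dots> = (\<Sum>l\<le>d. mconst (if l = d then r else 0) * a l)"
    proof (rule sum.cong[OF refl])
      fix l assume l: "l \<in> {..d}"
      have "(\<Sum>x\<le>d. c x * of_nat x ^ l) = r * u * (-1)^d * of_int (Gfd d l)"
        by (simp add: c_def Gfd_def sum_distrib_left mult_ac)
      also have "\<dots> = (if l = d then r else 0)"
      proof -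
        have f: "of_int (fact d :: int) = (of_nat (fact d) :: 'a)"
          by (metis of_int_of_nat_eq of_nat_fact)
        have u': "u * of_nat (fact d) = 1" using u by (simp add: mult.commute)
        show ?thesis using l Gfd_val[of l d] u' by (auto simp: algebra_simps f)
      qed
      finally show "mconst (\<Sum>x\<le>d. c x * of_nat x ^ l) * a l = mconst (if l = d then r else 0) * a l" by simp
    qed
    also have "\<dots> = (\<Sum>l\<le>d. if l = d then mconst r * a d else 0)"
      by (rule sum.cong) auto
    also have "\<dots> = mconst r * a d"
      by (simp only: sum.delta finite_atMost) simp
    finally show ?thesis .
  qed
  ultimately show ?thesis by simp
qed


lemma extract_all:
  fixes a :: "nat \<Rightarrow> 'a::comm_ring_1 mpoly"
  assumes "of_nat (fact d) * u = (1::'a)"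
    and "\<And>l. l \<le> d \<Longrightarrow> mfree i (a l)"
    and "\<And>s r. elem_map i (mconst r * (\<Sum>l\<le>d. mconst s ^ l * a l)) \<in> Ggrp n e"
  shows "l \<le> d \<Longrightarrow> elem_map i (mconst r * a l) \<in> Ggrp n e"
  using assms
proof (induction d arbitrary: u l r)
  case 0
  then show ?case using "0.prems"(4)[of r 0] by simp
next
  case (Suc d)
  have top: "elem_map i (mconst r' * a (Suc d)) \<in> Ggrp n e" for r'
    by (rule extract_top[OF Suc.prems(2)]) (use Suc.prems in auto)
  show ?case
  proof (cases "l = Suc d")
    case True
    then show ?thesis using top by simp
  next
    case False
    then have ld: "l \<le> d" using Suc.prems(1) by simp
    show ?thesis
    proof (rule Suc.IH[OF ld])
      show "of_nat (fact d) * (of_nat (Suc d) * u) = (1::'a)"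
        using Suc.prems(2) by (simp add: algebra_simps)
      show "\<And>l. l \<le> d \<Longrightarrow> mfree i (a l)" using Suc.prems by auto
      fix s r
      have fs: "mfree i (mconst (- r * s ^ Suc d) * a (Suc d))"
        using Suc.prems by simp
      have "elem_map i (mconst r * (\<Sum>l\<le>Suc d. mconst s ^ l * a l)) \<circ> elem_map i (mconst (- r * s ^ Suc d) * a (Suc d))
          \<in> Ggrp n e"
        by (rule Ggrp_comp[OF Suc.prems(4) top])
      also have "elem_map i (mconst r * (\<Sum>l\<le>Suc d. mconst s ^ l * a l)) \<circ> elem_map i (mconst (- r * s ^ Suc d) * a (Suc d))
         = elem_map i (mconst r * (\<Sum>l\<le>Suc d. mconst s ^ l * a l) + mconst (- r * s ^ Suc d) * a (Suc d))"
        by (rule elem_map_comp[OF fs])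
      also have "mconst r * (\<Sum>l\<le>Suc d. mconst s ^ l * a l) + mconst (- r * s ^ Suc d) * a (Suc d)
          = mconst r * (\<Sum>l\<le>d. mconst s ^ l * a l)"
        by (simp add: mconst_mult mconst_uminus mconst_power algebra_simps)
      finally show "elem_map i (mconst r * (\<Sum>l\<le>d. mconst s ^ l * a l)) \<in> Ggrp n e" .
    qed
  qed
qed

lemma fact_inv_le: "of_nat (fact c) * u = (1::'a::comm_ring_1) \<Longrightarrow> d \<le> c \<Longrightarrow> \<exists>v. of_nat (fact d) * v = (1::'a)"
proof -
  assume u: "of_nat (fact c) * u = (1::'a)" and "d \<le> c"
  then have "fact d dvd (fact c :: nat)" by (simp add: fact_dvd)
  then obtain k where "fact c = fact d * (k::nat)" by (auto simp: dvd_def)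
  then have "of_nat (fact d) * (of_nat k * u) = (1::'a)" using u by (simp add: mult.assoc)
  then show ?thesis by blast
qed

lemma choose_inv: "of_nat (fact d) * u = (1::'a::comm_ring_1) \<Longrightarrow> l \<le> d \<Longrightarrow> \<exists>v. of_nat (d choose l) * v = (1::'a)"
proof -
  assume u: "of_nat (fact d) * u = (1::'a)" and l: "l \<le> d"
  have "fact d = (d choose l) * (fact l * fact (d - l))"
    using binomial_fact_lemma[OF l] by (simp add: mult_ac)
  then have "of_nat (d choose l) * (of_nat (fact l * fact (d - l)) * u) = (1::'a)"
    using u by (metis mult.assoc of_nat_mult)
  then show ?thesis by blast
qed

lemma conj_extract:
  fixes Z Y :: "'a::comm_ring_1 mpoly"
  assumes ki: "k \<noteq> i"
    and fZ: "mfree i Z" "mfree k Z" and fY: "mfree i Y" "mfree k Y"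
    and u: "of_nat (fact d) * u = (1::'a)"
    and A: "\<And>r. elem_map i (mconst r * (Z * mvar k ^ d)) \<in> Ggrp n e"
    and B: "\<And>s. elem_map k (mconst s * Y) \<in> Ggrp n e"
    and l: "l \<le> d"
  shows "elem_map i (mconst r * (Z * Y ^ l * mvar k ^ (d - l))) \<in> Ggrp n e"
proof -
  define a where "a l = of_nat (d choose l) * (Z * Y ^ l * mvar k ^ (d - l))" for l
  have fa: "mfree i (a l)" for l using ki fZ fY by (simp add: a_def)
  have H: "elem_map i (mconst r * (\<Sum>l\<le>d. mconst s ^ l * a l)) \<in> Ggrp n e" for s r
  proof -
    let ?h = "mconst s * Y"
    have fh: "mfree i ?h" "mfree k ?h" using fY by auto
    have fg: "mfree i (mconst r * (Z * mvar k ^ d))" using fZ ki by simp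
    have "elem_map k ?h \<circ> elem_map i (mconst r * (Z * mvar k ^ d)) \<circ> elem_map k (- ?h) \<in> Ggrp n e"
    proof -
      have "elem_map k (- ?h) = elem_map k (mconst (- s) * Y)" by (simp add: mconst_uminus)
      then show ?thesis using Ggrp_comp[OF Ggrp_comp[OF B A] B] by simp
    qed
    also have "elem_map k ?h \<circ> elem_map i (mconst r * (Z * mvar k ^ d)) \<circ> elem_map k (- ?h)
       = elem_map i (elem_map k ?h (mconst r * (Z * mvar k ^ d)))"
      by (rule elem_map_conj[OF ki fg fh])
    also have "elem_map k ?h (mconst r * (Z * mvar k ^ d)) = mconst r * (Z * (?h + mvar k) ^ d)"
    proof -
      have "elem_map k ?h Z = Z" unfolding elem_map_def by (rule mfree_subst_id[OF fZ(2)]) simp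
      then show ?thesis unfolding elem_map_apply
        by (simp add: msubst_mult msubst_power elem_map_apply add.commute)
    qed
    also have "(?h + mvar k) ^ d = (\<Sum>l\<le>d. of_nat (d choose l) * ?h ^ l * mvar k ^ (d - l))"
      by (rule binomial_ring)
    also have "mconst r * (Z * \<dots>) = mconst r * (\<Sum>l\<le>d. mconst s ^ l * a l)"
      by (simp add: a_def sum_distrib_left power_mult_distrib mult_ac)
    finally show ?thesis .
  qed
  obtain v where v: "of_nat (d choose l) * v = (1::'a)" using choose_inv[OF u l] by blast
  have "elem_map i (mconst (r * v) * a l) \<in> Ggrp n e"
    by (rule extract_all[OF u fa H l])
  moreover have "mconst (r * v) * a l = mconst r * (Z * Y ^ l * mvar k ^ (d - l))"
  proof -
    have "mconst (r * v) * a l = mconst (r * (v * of_nat (d choose l))) * (Z * Y ^ l * mvar k ^ (d - l))"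
      by (simp add: a_def mconst_mult mconst_of_nat[symmetric] mult_ac)
    then show ?thesis using v by (simp add: mult.commute)
  qed
  ultimately show ?thesis by simp
qed



lemma cyc_succ_range: "i \<in> {1..n} \<Longrightarrow> cyc_succ n i \<in> {1..n}"
  by (auto simp: cyc_succ_def)

lemma cyc_succ_neq: "2 \<le> n \<Longrightarrow> i \<in> {1..n} \<Longrightarrow> cyc_succ n i \<noteq> i"
  by (auto simp: cyc_succ_def)

lemma cyc_add_0: "i \<in> {1..n} \<Longrightarrow> cyc_add n i 0 = i"
  by (auto simp: cyc_add_def)

lemma cyc_add_shift: "i \<in> {1..n} \<Longrightarrow> cyc_add n (cyc_succ n i) q = cyc_add n i (Suc q)"
proof -
  assume i: "i \<in> {1..n}"
  show ?thesis
  proof (cases "i = n")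
    case True
    then have "n - 1 + Suc q = n + q" using i by auto
    then show ?thesis using True i by (simp add: cyc_add_def cyc_succ_def)
  next
    case False
    then show ?thesis using i by (simp add: cyc_add_def cyc_succ_def)
  qed
qed

lemma dist_zero: fixes i j n :: nat shows "i \<in> {1..n} \<Longrightarrow> j \<in> {1..n} \<Longrightarrow> (j + n - i) mod n = 0 \<Longrightarrow> j = i"
proof -
  assume i: "i \<in> {1..n}" and j: "j \<in> {1..n}" and h: "(j + n - i) mod n = 0"
  have "0 < j + n - i" "j + n - i < 2 * n" using i j by auto
  moreover from h obtain q where "j + n - i = n * q" by (auto simp: mod_eq_0_iff_dvd dvd_def)
  ultimately have a: "0 < n * q" "n * q < n * 2" by (simp_all add: mult.commute)
  then have "q < 2" "q \<noteq> 0" by (simp_all add: mult_less_cancel1)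
  then have "q = 1" by simp
  then show ?thesis using \<open>j + n - i = n * q\<close> i j by auto
qed

lemma modm1: "(x::nat) mod n \<noteq> 0 \<Longrightarrow> (x - 1) mod n = x mod n - 1"
proof (cases "n = 0")
  case True then show ?thesis by simp
next
  case False
  assume h: "x mod n \<noteq> 0"
  have "x - 1 = (x mod n - 1) + n * (x div n)" using div_mult_mod_eq[of x n] h
    by (metis add.commute add_diff_assoc2 less_one linorder_not_less mult.commute)
  then have "(x - 1) mod n = (x mod n - 1) mod n" by simp
  also have "\<dots> = x mod n - 1" using False by (meson diff_le_self le_less_trans mod_less mod_less_divisor neq0_conv)
  finally show ?thesis .
qed

lemma dist_succ: "i \<in> {1..n} \<Longrightarrow> j \<in> {1..n} \<Longrightarrow> j \<noteq> i \<Longrightarrow>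
    (j + n - i) mod n = Suc ((j + n - cyc_succ n i) mod n)"
proof -
  assume i: "i \<in> {1..n}" and j: "j \<in> {1..n}" and ji: "j \<noteq> i"
  have nz: "(j + n - i) mod n \<noteq> 0" using dist_zero[OF i j] ji by blast
  show ?thesis
  proof (cases "i = n")
    case True
    then have "j < n" using j ji by auto
    have "j = Suc ((j + n - Suc 0) mod n)" using \<open>j < n\<close> j using mod_if not_less_eq by fastforce
    then show ?thesis using True j \<open>j < n\<close> by (simp add: cyc_succ_def)
  next
    case False
    then have e1: "j + n - cyc_succ n i = (j + n - i) - 1" using i by (simp add: cyc_succ_def)
    have e2: "((j + n - i) - 1) mod n = (j + n - i) mod n - 1" by (rule modm1[OF nz])
    show ?thesis unfolding e1 e2 using nz by simp
  qed
qed

lemma t_prod_succ: "2 \<le> n \<Longrightarrow> i \<in> {1..n} \<Longrightarrow> t_prod n e i (cyc_succ n i) = e i"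
proof -
  assume n: "2 \<le> n" and i: "i \<in> {1..n}"
  have "(cyc_succ n i + n - i) mod n = 1"
  proof (cases "i = n")
    case True then show ?thesis using n by (simp add: cyc_succ_def)
  next
    case False then have "cyc_succ n i + n - i = n + 1" using i by (simp add: cyc_succ_def)
    then show ?thesis using n by (simp add: mod_Suc)
  qed
  then show ?thesis using i by (simp add: t_prod_def cyc_add_0)
qed

lemma t_prod_step: "i \<in> {1..n} \<Longrightarrow> j \<in> {1..n} \<Longrightarrow> j \<noteq> i \<Longrightarrow>
   t_prod n e i j = e i * t_prod n e (cyc_succ n i) j"
proof -
  assume i: "i \<in> {1..n}" and j: "j \<in> {1..n}" and ji: "j \<noteq> i"
  have "t_prod n e i j = (\<Prod>k<Suc ((j + n - cyc_succ n i) mod n). e (cyc_add n i k))"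
    unfolding t_prod_def dist_succ[OF i j ji] ..
  also have "\<dots> = e (cyc_add n i 0) * (\<Prod>k<(j + n - cyc_succ n i) mod n. e (cyc_add n i (Suc k)))"
    by (rule prod.lessThan_Suc_shift)
  also have "\<dots> = e i * t_prod n e (cyc_succ n i) j"
    by (simp add: t_prod_def cyc_add_0[OF i] cyc_add_shift[OF i])
  finally show ?thesis .
qed

lemma cyc_add_bij: "1 \<le> n \<Longrightarrow> i \<in> {1..n} \<Longrightarrow> bij_betw (cyc_add n i) {..<n} {1..n}"
proof -
  assume n: "1 \<le> n" and i: "i \<in> {1..n}"
  have inj: "inj_on (cyc_add n i) {..<n}"
  proof (rule inj_onI)
    fix x y assume x: "x \<in> {..<n}" and y: "y \<in> {..<n}" and h: "cyc_add n i x = cyc_add n i y"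
    then have "(i - 1 + x) mod n = (i - 1 + y) mod n" by (simp add: cyc_add_def)
    then obtain q1 q2 where "i - 1 + x + n * q1 = i - 1 + y + n * q2" by (auto simp: nat_mod_eq_iff)
    then have "x + n * q1 = y + n * q2" by simp
    then have "x mod n = y mod n" by (auto simp: nat_mod_eq_iff)
    then show "x = y" using x y by simp
  qed
  have sub: "cyc_add n i ` {..<n} \<subseteq> {1..n}"
  proof
    fix x assume "x \<in> cyc_add n i ` {..<n}"
    then obtain q where "x = ((i - 1 + q) mod n) + 1" by (auto simp: cyc_add_def)
    moreover have "Suc ((i - 1 + q) mod n) \<le> n" using n using less_eq_Suc_le mod_less_divisor by presburger
    ultimately show "x \<in> {1..n}" by simp
  qed
  have "card (cyc_add n i ` {..<n}) = card {1..n}"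
    using card_image[OF inj] by simp
  then have "cyc_add n i ` {..<n} = {1..n}"
    using sub by (intro card_subset_eq) auto
  then show ?thesis using inj by (simp add: bij_betw_def)
qed

lemma t_prod_full: "2 \<le> n \<Longrightarrow> j \<in> {1..n} \<Longrightarrow> e j * t_prod n e (cyc_succ n j) j = (\<Prod>k\<in>{1..n}. e k)"
proof -
  assume n: "2 \<le> n" and j: "j \<in> {1..n}"
  have d: "(j + n - cyc_succ n j) mod n = n - 1"
  proof (cases "j = n")
    case True
    have "(n + n - Suc 0) mod n = n - Suc 0" using n using mod_if by force
    then show ?thesis using True n by (simp add: cyc_succ_def)
  next
    case False then have "j + n - cyc_succ n j = n - 1" using j by (simp add: cyc_succ_def)
    then show ?thesis using n by simp
  qed
  have "e j * t_prod n e (cyc_succ n j) j = e (cyc_add n j 0) * (\<Prod>k<n - 1. e (cyc_add n j (Suc k)))"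
    by (simp add: t_prod_def d cyc_add_0[OF j] cyc_add_shift[OF j])
  also have "\<dots> = (\<Prod>k<Suc (n - 1). e (cyc_add n j k))"
    by (rule prod.lessThan_Suc_shift[symmetric])
  also have "\<dots> = (\<Prod>k<n. e (cyc_add n j k))" using n by simp
  also have "\<dots> = (\<Prod>k\<in>{1..n}. e k)"
    using prod.reindex_bij_betw[OF cyc_add_bij[of n j], of e] n j by simp
  finally show ?thesis .
qed

lemma dist_induct:
  assumes n: "2 \<le> n"
    and base: "\<And>i. i \<in> {1..n} \<Longrightarrow> P i (cyc_succ n i)"
    and step: "\<And>i j. i \<in> {1..n} \<Longrightarrow> j \<in> {1..n} \<Longrightarrow> j \<noteq> i \<Longrightarrow> j \<noteq> cyc_succ n i \<Longrightarrow>
        P (cyc_succ n i) j \<Longrightarrow> P i j"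
  shows "i \<in> {1..n} \<Longrightarrow> j \<in> {1..n} \<Longrightarrow> j \<noteq> i \<Longrightarrow> P i j"
proof -
  have "\<forall>i j. i \<in> {1..n} \<longrightarrow> j \<in> {1..n} \<longrightarrow> j \<noteq> i \<longrightarrow> (j + n - i) mod n = d \<longrightarrow> P i j" for d
  proof (induction d)
    case 0
    show ?case
    proof (intro allI impI)
      fix i j assume "i \<in> {1..n}" "j \<in> {1..n}" "j \<noteq> i" "(j + n - i) mod n = 0"
      then show "P i j" using dist_zero[of i n j] by simp
    qed
  next
    case (Suc d)
    show ?case
    proof (intro allI impI)
      fix i j assume i: "i \<in> {1..n}" and j: "j \<in> {1..n}" and ji: "j \<noteq> i" and dd: "(j + n - i) mod n = Suc d"
      let ?k = "cyc_succ n i"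
      have k: "?k \<in> {1..n}" using cyc_succ_range[OF i] .
      have dk: "(j + n - ?k) mod n = d" using dist_succ[OF i j ji] dd by simp
      show "P i j"
      proof (cases "j = ?k")
        case True then show ?thesis using base[OF i] by simp
      next
        case False
        then have "P ?k j" using Suc.IH k j dk by blast
        then show ?thesis using step[OF i j ji False] by blast
      qed
    qed
  qed
  then show "i \<in> {1..n} \<Longrightarrow> j \<in> {1..n} \<Longrightarrow> j \<noteq> i \<Longrightarrow> P i j" by blast
qed



lemma gen_in: "i \<in> {1..n} \<Longrightarrow> elem_map i (mconst r * mvar (cyc_succ n i) ^ e i) \<in> Ggrp n e"
proof -
  assume i: "i \<in> {1..n}"
  have "alpha i (cyc_succ n i) (e i) r \<circ> id \<in> Ggrp n e"
    by (rule Ggrp.Ggrp_step[OF Ggrp.Ggrp_id i])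
  then show ?thesis by (simp add: alpha_def)
qed

lemma gen_in1: "i \<in> {1..n} \<Longrightarrow> elem_map i (mconst r * (1 * mvar (cyc_succ n i) ^ e i)) \<in> Ggrp n e"
  using gen_in by simp

lemma e_le_max: fixes i n :: nat and e :: "nat \<Rightarrow> nat" shows "i \<in> {1..n} \<Longrightarrow> e i \<le> Max (e ` {1..n})"
  by (intro Max_ge finite_imageI) auto

lemma succ2_neq: "3 \<le> n \<Longrightarrow> i \<in> {1..n} \<Longrightarrow> cyc_succ n (cyc_succ n i) \<noteq> i"
  by (auto simp: cyc_succ_def)

lemma step_dist:
  fixes u :: "'a::comm_ring_1"
  assumes n: "3 \<le> n" and u: "of_nat (fact (Max (e ` {1..n}))) * u = 1"
    and i: "i \<in> {1..n}" and j: "j \<in> {1..n}" and ji: "j \<noteq> i" and jk: "j \<noteq> cyc_succ n i"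
    and ei: "1 \<le> e i"
    and QW: "\<And>r::'a. elem_map (cyc_succ n i) (mconst r * mvar j ^ W) \<in> Ggrp n e"
    and Q0: "\<And>r::'a. elem_map (cyc_succ n i) (mconst r * mvar j ^ W0) \<in> Ggrp n e"
  shows "elem_map i (mconst (r::'a) * mvar j ^ (W + W0 * (e i - 1))) \<in> Ggrp n e"
proof -
  let ?k = "cyc_succ n i"
  have ki: "?k \<noteq> i" using cyc_succ_neq[of n i] n i by simp
  obtain v where v: "of_nat (fact (e i)) * v = (1::'a)" using fact_inv_le[OF u e_le_max[of i n e, OF i]] by blast
  obtain v' where v': "of_nat (fact (e i - 1)) * v' = (1::'a)"
  proof -
    have m: "e i \<le> Max (e ` {1..n})" by (rule e_le_max[OF i])
    have "e i - 1 \<le> Max (e ` {1..n})" using m by linarith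
    then show ?thesis using fact_inv_le[OF u] that by blast
  qed
  have s1: "elem_map i (mconst r' * (1 * (mvar j ^ W) ^ 1 * mvar ?k ^ (e i - 1))) \<in> Ggrp n e" for r' :: 'a
    by (rule conj_extract[OF ki _ _ _ _ v gen_in1[OF i] QW]) (use ji jk ei in auto)
  have s1': "elem_map i (mconst r' * (mvar j ^ W * mvar ?k ^ (e i - 1))) \<in> Ggrp n e" for r' :: 'a
    using s1[of r'] by simp
  have "elem_map i (mconst r * (mvar j ^ W * (mvar j ^ W0) ^ (e i - 1) * mvar ?k ^ (e i - 1 - (e i - 1)))) \<in> Ggrp n e"
    by (rule conj_extract[OF ki _ _ _ _ v' s1' Q0]) (use ji jk in auto)
  then show ?thesis by (simp add: power_add power_mult)
qed

lemma step_m: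
  fixes u :: "'a::comm_ring_1"
  assumes n: "3 \<le> n" and u: "of_nat (fact (Max (e ` {1..n}))) * u = 1"
    and i: "i \<in> {1..n}" and ei: "1 \<le> e i" and ej0: "1 \<le> e (cyc_succ n i)"
    and QW: "\<And>r::'a. elem_map (cyc_succ n (cyc_succ n i)) (mconst r * mvar (cyc_succ n i) ^ W) \<in> Ggrp n e"
    and Q0: "\<And>r::'a. elem_map (cyc_succ n (cyc_succ n i)) (mconst r * mvar (cyc_succ n i) ^ W0) \<in> Ggrp n e"
  shows "elem_map i (mconst (r::'a) * mvar (cyc_succ n i) ^ (e i - 1 + W + W0 * (e (cyc_succ n i) - 1))) \<in> Ggrp n e"
proof -
  define j where "j = cyc_succ n i"
  define k where "k = cyc_succ n j"
  have j: "j \<in> {1..n}" unfolding j_def by (rule cyc_succ_range[OF i])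
  have ji: "j \<noteq> i" unfolding j_def using cyc_succ_neq[of n i] n i by simp
  have kj: "k \<noteq> j" unfolding k_def using cyc_succ_neq[of n j] n j by simp
  have ki: "k \<noteq> i" unfolding k_def j_def using succ2_neq[OF n i] .
  obtain v where v: "of_nat (fact (e i)) * v = (1::'a)" using fact_inv_le[OF u e_le_max[of i n e, OF i]] by blast
  obtain w where w: "of_nat (fact (e j)) * w = (1::'a)" using fact_inv_le[OF u e_le_max[of j n e, OF j]] by blast
  obtain w' where w': "of_nat (fact (e j - 1)) * w' = (1::'a)"
  proof -
    have m: "e j \<le> Max (e ` {1..n})" by (rule e_le_max[OF j])
    have "e j - 1 \<le> Max (e ` {1..n})" using m by linarith
    then show ?thesis using fact_inv_le[OF u] that by blast
  qed
  have gj: "elem_map j (mconst s * mvar k ^ e j) \<in> Ggrp n e" for s :: 'a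
    unfolding k_def by (rule gen_in[OF j])
  have gi: "elem_map i (mconst s * (1 * mvar j ^ e i)) \<in> Ggrp n e" for s :: 'a
    unfolding j_def by (rule gen_in1[OF i])
  have s1: "elem_map i (mconst r' * (1 * (mvar k ^ e j) ^ 1 * mvar j ^ (e i - 1))) \<in> Ggrp n e" for r' :: 'a
    by (rule conj_extract[OF ji _ _ _ _ v gi gj]) (use ki kj ei in auto)
  have s1': "elem_map i (mconst r' * (mvar j ^ (e i - 1) * mvar k ^ e j)) \<in> Ggrp n e" for r' :: 'a
    using s1[of r'] by (simp add: mult.commute)
  have QW': "elem_map k (mconst s * mvar j ^ W) \<in> Ggrp n e" for s :: 'a
    unfolding k_def j_def by (rule QW)
  have Q0': "elem_map k (mconst s * mvar j ^ W0) \<in> Ggrp n e" for s :: 'a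
    unfolding k_def j_def by (rule Q0)
  have s2: "elem_map i (mconst r' * (mvar j ^ (e i - 1) * (mvar j ^ W) ^ 1 * mvar k ^ (e j - 1))) \<in> Ggrp n e" for r' :: 'a
    by (rule conj_extract[OF ki _ _ _ _ w s1' QW']) (use ji kj ej0 j_def in auto)
  have s2': "elem_map i (mconst r' * ((mvar j ^ (e i - 1) * mvar j ^ W) * mvar k ^ (e j - 1))) \<in> Ggrp n e" for r' :: 'a
    using s2[of r'] by simp
  have "elem_map i (mconst r * ((mvar j ^ (e i - 1) * mvar j ^ W) * (mvar j ^ W0) ^ (e j - 1) * mvar k ^ (e j - 1 - (e j - 1)))) \<in> Ggrp n e"
    by (rule conj_extract[OF ki _ _ _ _ w' s2' Q0']) (use ji kj in auto)
  then show ?thesis unfolding j_def[symmetric] by (simp add: power_add power_mult)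
qed


lemma mult_pred_aux: "1 \<le> x \<Longrightarrow> W + W * (x - 1) = x * (W::nat)"
  by (cases x) auto

theorem main_part1:
  fixes n :: nat and e :: "nat \<Rightarrow> nat" and u :: "'a::comm_ring_1"
  assumes n: "n \<ge> 3"
    and e1: "\<forall>k\<in>{1..n}. e k \<ge> 1"
    and E2: "(\<Prod>k\<in>{1..n}. e k) \<ge> 2"
    and u: "of_nat (fact (Max (e ` {1..n}))) * u = 1"
  shows "i \<in> {1..n} \<Longrightarrow> j \<in> {1..n} \<Longrightarrow> j \<noteq> i \<Longrightarrow>
     elem_map i (mconst (r::'a) * mvar j ^ (t_prod n e i j + m * ((\<Prod>k\<in>{1..n}. e k) - 1))) \<in> Ggrp n e"
proof -
  define E where "E = (\<Prod>k\<in>{1..n}. e k)"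
  have n2: "2 \<le> n" using n by simp
  define P where "P m i j \<longleftrightarrow> (\<forall>r::'a. elem_map i (mconst r * mvar j ^ (t_prod n e i j + m * (E - 1))) \<in> Ggrp n e)" for m i j
  have P0: "P 0 i j" if "i \<in> {1..n}" "j \<in> {1..n}" "j \<noteq> i" for i j
  proof (rule dist_induct[OF n2 _ _ that])
    fix i assume i: "i \<in> {1..n}"
    show "P 0 i (cyc_succ n i)" unfolding P_def
    proof (intro allI)
      fix r :: 'a
      show "elem_map i (mconst r * mvar (cyc_succ n i) ^ (t_prod n e i (cyc_succ n i) + 0 * (E - 1))) \<in> Ggrp n e"
        using gen_in[OF i, of r e] t_prod_succ[OF n2 i, of e] by simp
    qed
  next
    fix i j assume i: "i \<in> {1..n}" and j: "j \<in> {1..n}" and ji: "j \<noteq> i" and jk: "j \<noteq> cyc_succ n i"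
      and IH: "P 0 (cyc_succ n i) j"
    let ?W = "t_prod n e (cyc_succ n i) j"
    have Q: "elem_map (cyc_succ n i) (mconst r * mvar j ^ ?W) \<in> Ggrp n e" for r :: 'a
      using IH unfolding P_def by simp
    have "elem_map i (mconst r * mvar j ^ (?W + ?W * (e i - 1))) \<in> Ggrp n e" for r :: 'a
      by (rule step_dist[OF n u i j ji jk _ Q Q]) (use e1 i in auto)
    moreover have "?W + ?W * (e i - 1) = t_prod n e i j"
      using t_prod_step[OF i j ji, of e] mult_pred_aux[of "e i" ?W] e1 i by simp
    ultimately show "P 0 i j" unfolding P_def by simp
  qed
  have PS: "P m i j" if "i \<in> {1..n}" "j \<in> {1..n}" "j \<noteq> i" for m i j
    using that
  proof (induction m arbitrary: i j)
    case 0 then show ?case using P0 by blast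
  next
    case (Suc m)
    show ?case
    proof (rule dist_induct[OF n2 _ _ Suc.prems])
      fix i assume i: "i \<in> {1..n}"
      let ?j = "cyc_succ n i"
      let ?k = "cyc_succ n ?j"
      have j: "?j \<in> {1..n}" by (rule cyc_succ_range[OF i])
      have k: "?k \<in> {1..n}" by (rule cyc_succ_range[OF j])
      have kj: "?j \<noteq> ?k" using cyc_succ_neq[OF n2 j] by simp
      let ?W0 = "t_prod n e ?k ?j"
      have QW: "elem_map ?k (mconst r * mvar ?j ^ (?W0 + m * (E - 1))) \<in> Ggrp n e" for r :: 'a
        using Suc.IH[OF k j kj] unfolding P_def by simp
      have Q0: "elem_map ?k (mconst r * mvar ?j ^ ?W0) \<in> Ggrp n e" for r :: 'a
        using P0[OF k j kj] unfolding P_def by simp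
      have ei: "1 \<le> e i" using e1 i by auto
      have ej: "1 \<le> e ?j" using e1 j by auto
      have mem: "elem_map i (mconst r * mvar ?j ^ (e i - 1 + (?W0 + m * (E - 1)) + ?W0 * (e ?j - 1))) \<in> Ggrp n e" for r :: 'a
        by (rule step_m[OF n u i ei ej QW Q0])
      have eq: "e i - 1 + (?W0 + m * (E - 1)) + ?W0 * (e ?j - 1) = t_prod n e i ?j + Suc m * (E - 1)"
      proof -
        have full: "e ?j * ?W0 = E" unfolding E_def by (rule t_prod_full[OF n2 j])
        have "?W0 + ?W0 * (e ?j - 1) = e ?j * ?W0" using ej by (rule mult_pred_aux)
        moreover have "1 \<le> E" using E2 unfolding E_def by simp
        ultimately show ?thesis using full ei t_prod_succ[OF n2 i, of e] by simp
      qed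
      show "P (Suc m) i ?j" unfolding P_def using mem unfolding eq by blast
    next
      fix i j assume i: "i \<in> {1..n}" and j: "j \<in> {1..n}" and ji: "j \<noteq> i" and jk: "j \<noteq> cyc_succ n i"
        and IH: "P (Suc m) (cyc_succ n i) j"
      let ?W0 = "t_prod n e (cyc_succ n i) j"
      have QW: "elem_map (cyc_succ n i) (mconst r * mvar j ^ (?W0 + Suc m * (E - 1))) \<in> Ggrp n e" for r :: 'a
        using IH unfolding P_def by simp
      have k: "cyc_succ n i \<in> {1..n}" by (rule cyc_succ_range[OF i])
      have Q0: "elem_map (cyc_succ n i) (mconst r * mvar j ^ ?W0) \<in> Ggrp n e" for r :: 'a
        using P0[OF k j jk] unfolding P_def by simp
      have mem: "elem_map i (mconst r * mvar j ^ ((?W0 + Suc m * (E - 1)) + ?W0 * (e i - 1))) \<in> Ggrp n e" for r :: 'a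
        by (rule step_dist[OF n u i j ji jk _ QW Q0]) (use e1 i in auto)
      have eq: "(?W0 + Suc m * (E - 1)) + ?W0 * (e i - 1) = t_prod n e i j + Suc m * (E - 1)"
      proof -
        have "?W0 + ?W0 * (e i - 1) = e i * ?W0" using e1 i by (intro mult_pred_aux) auto
        then show ?thesis using t_prod_step[OF i j ji, of e] by simp
      qed
      show "P (Suc m) i j" unfolding P_def using mem unfolding eq by blast
    qed
  qed
  show "i \<in> {1..n} \<Longrightarrow> j \<in> {1..n} \<Longrightarrow> j \<noteq> i \<Longrightarrow>
     elem_map i (mconst (r::'a) * mvar j ^ (t_prod n e i j + m * ((\<Prod>k\<in>{1..n}. e k) - 1))) \<in> Ggrp n e"
    using PS[of i j m] unfolding P_def E_def by blast
qed


theorem mainTheorem9: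
  fixes n :: nat and e :: "nat \<Rightarrow> nat"
  assumes "n \<ge> 3"
    and "\<forall>k\<in>{1..n}. e k \<ge> 1"
    and "(\<Prod>k\<in>{1..n}. e k) \<ge> 2"
    and "\<exists>u::'a::comm_ring_1. of_nat (fact (Max (e ` {1..n}))) * u = 1"
  shows "(\<forall>i\<in>{1..n}. \<forall>j\<in>{1..n}. i \<noteq> j \<longrightarrow> (\<forall>(m::nat) (r::'a).
            alpha i j (t_prod n e i j + m * ((\<Prod>k\<in>{1..n}. e k) - 1)) r \<in> Ggrp n e))
       \<and> (\<forall>i\<in>{1..n}. \<forall>j\<in>{1..n}. i \<noteq> j \<longrightarrow> (\<forall>P :: 'a poly.
            elem_map i (mvar j ^ t_prod n e i j
                        * poly (map_poly mconst P) (mvar j ^ ((\<Prod>k\<in>{1..n}. e k) - 1)))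
            \<in> Ggrp n e))"
proof -
  obtain u :: 'a where u: "of_nat (fact (Max (e ` {1..n}))) * u = 1" using assms(4) by blast
  define E where "E = (\<Prod>k\<in>{1..n}. e k)"
  have M: "elem_map i (mconst (r::'a) * mvar j ^ (t_prod n e i j + m * (E - 1))) \<in> Ggrp n e"
    if "i \<in> {1..n}" "j \<in> {1..n}" "i \<noteq> j" for i j m r
    unfolding E_def by (rule main_part1[OF assms(1-3) u]) (use that in auto)
  have part1: "\<forall>i\<in>{1..n}. \<forall>j\<in>{1..n}. i \<noteq> j \<longrightarrow> (\<forall>(m::nat) (r::'a).
            alpha i j (t_prod n e i j + m * (E - 1)) r \<in> Ggrp n e)"
    using M by (simp add: alpha_def)
  have part2: "elem_map i (mvar j ^ t_prod n e i j * poly (map_poly mconst P) (mvar j ^ (E - 1))) \<in> Ggrp n e"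
    if ij: "i \<in> {1..n}" "j \<in> {1..n}" "i \<noteq> j" for i j and P :: "'a poly"
  proof -
    let ?D = "degree (map_poly mconst P)"
    have "mvar j ^ t_prod n e i j * poly (map_poly mconst P) (mvar j ^ (E - 1))
        = (\<Sum>k\<le>?D. mconst (coeff P k) * mvar j ^ (t_prod n e i j + k * (E - 1)))"
    proof -
      have "poly (map_poly mconst P) (mvar j ^ (E - 1)) = (\<Sum>k\<le>?D. coeff (map_poly mconst P) k * (mvar j ^ (E - 1)) ^ k)"
        by (rule poly_altdef)
      also have "\<dots> = (\<Sum>k\<le>?D. mconst (coeff P k) * mvar j ^ ((E - 1) * k))"
        by (simp add: coeff_map_poly power_mult[symmetric])
      finally show ?thesis
        by (simp add: sum_distrib_left power_add mult_ac)
    qed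
    moreover have "elem_map i (\<Sum>k\<le>?D. mconst (coeff P k) * mvar j ^ (t_prod n e i j + k * (E - 1))) \<in> Ggrp n e"
      by (rule elem_map_sum) (use ij M in auto)
    ultimately show ?thesis by simp
  qed
  show ?thesis using part1 part2 unfolding E_def by blast
qed


end
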